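(* The series $\displaystyle\sum_{\substack{p \text{ prime}\\ p+2\text{ prime}}}\frac1p$ converges. *)

theory Defs
  imports Complex_Main "HOL-Computational_Algebra.Primes"
begin

end

theory Submission
  imports Defs "HOL-Number_Theory.Cong" "HOL-Analysis.Analysis" "HOL-Real_Asymp.Real_Asymp"
begin

lemma alt_partial:
  assumes "m > 0"
  shows "(\<Sum>j\<le>r. (-1::int)^j * int (m choose j)) = (-1)^r * int ((m-1) choose r)"
proof (induction r)
  case 0 then show ?case by simp
next
  case (Suc r)
  obtain k where m: "m = Suc k" using assms by (cases m) auto
  have "(\<Sum>j\<le>Suc r. (-1::int)^j * int (m choose j)) = (-1)^r * int (k choose r) + (-1)^Suc r * int (m choose Suc r)"
    using Suc by (simp add: m)
  also have "\<dots> = (-1)^Suc r * int (k choose Suc r)"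
    by (simp add: m algebra_simps)
  finally show ?case by (simp add: m)
qed

lemma bonf:
  assumes "finite S" "even r"
  shows "(if S = {} then 1 else 0 :: int) \<le> (\<Sum>D\<in>{D. D \<subseteq> S \<and> card D \<le> r}. (-1)^card D)"
proof -
  have fin: "finite {D. D \<subseteq> S \<and> card D \<le> r}" using assms(1) by simp
  have "(\<Sum>D\<in>{D. D \<subseteq> S \<and> card D \<le> r}. (-1::int)^card D)
      = (\<Sum>j\<le>r. \<Sum>D\<in>{D \<in> {D. D \<subseteq> S \<and> card D \<le> r}. card D = j}. (-1)^card D)"
    by (rule sum.group[symmetric]) (use fin in auto)
  also have "\<dots> = (\<Sum>j\<le>r. (-1)^j * int (card S choose j))"
  proof (rule sum.cong[OF refl])
    fix j assume "j \<in> {..r}"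
    then have "{D \<in> {D. D \<subseteq> S \<and> card D \<le> r}. card D = j} = {D. D \<subseteq> S \<and> card D = j}" by auto
    then show "(\<Sum>D\<in>{D \<in> {D. D \<subseteq> S \<and> card D \<le> r}. card D = j}. (-1::int)^card D) = (-1)^j * int (card S choose j)"
      using n_subsets[OF assms(1), of j] by simp
  qed
  finally have eq: "(\<Sum>D\<in>{D. D \<subseteq> S \<and> card D \<le> r}. (-1::int)^card D) = (\<Sum>j\<le>r. (-1)^j * int (card S choose j))" .
  show ?thesis
  proof (cases "S = {}")
    case True
    then have "{D. D \<subseteq> S \<and> card D \<le> r} = {{}}" by auto
    then show ?thesis using True by simp
  next
    case False
    then have "card S > 0" using assms(1) by (simp add: card_gt_0_iff)
    then show ?thesis using False by (simp add: eq alt_partial assms(2))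
  qed
qed


definition Rset :: "nat set \<Rightarrow> nat set" where
  "Rset D = {c \<in> {..<\<Prod>D}. \<forall>p\<in>D. p dvd c * (c + 2)}"

lemma dvd_mod_cong:
  fixes q m c :: nat
  assumes "q dvd m"
  shows "(q dvd c * (c + 2)) = (q dvd (c mod m) * ((c mod m) + 2))"
proof -
  have "(c mod m) mod q = c mod q" using assms by (simp add: mod_mod_cancel)
  then have "((c mod m) * ((c mod m) + 2)) mod q = (c * (c + 2)) mod q"
    by (metis mod_add_left_eq mod_mult_eq)
  then show ?thesis by (simp add: dvd_eq_mod_eq_0)
qed

lemma Rp_eq:
  fixes p :: nat
  assumes "prime p" "odd p"
  shows "{c. c < p \<and> p dvd c * (c + 2)} = {0, p - 2}"
proof -
  have p3: "p \<ge> 3" using assms prime_ge_2_nat[of p] by (cases "p = 2") auto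
  show ?thesis
  proof (intro equalityI subsetI)
    fix c assume "c \<in> {c. c < p \<and> p dvd c * (c + 2)}"
    then have c1: "c < p" and h: "p dvd c * (c + 2)" by auto
    from h have c2: "p dvd c \<or> p dvd c + 2" by (simp only: prime_dvd_mult_iff[OF assms(1)])
    note c = c1 c2
    show "c \<in> {0, p - 2}"
    proof (cases "p dvd c")
      case True then have "c = 0" using c(1) by (metis dvd_imp_le le_neq_implies_less not_gr0 not_less)
      then show ?thesis by simp
    next
      case False
      then have "p dvd c + 2" using c by auto
      then obtain k where k: "c + 2 = p * k" by (auto elim: dvdE)
      have "k \<noteq> 0" proof assume "k = 0" then show False using k by simp qed
      moreover have "k < 2"
      proof (rule ccontr)
        assume "\<not> k < 2" then have "p * k \<ge> p * 2" by simp
        then show False using k c(1) p3 by linarith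
      qed
      ultimately have "k = 1" by linarith
      then have "c + 2 = p" using k by simp
      then have "c = p - 2" by linarith
      then show ?thesis by simp
    qed
  next
    fix c assume "c \<in> {0, p - 2}"
    then show "c \<in> {c. c < p \<and> p dvd c * (c + 2)}"
    proof
      assume "c = 0" then show ?thesis using p3 by simp
    next
      assume "c \<in> {p - 2}"
      then have c: "c = p - 2" by simp
      then have "c + 2 = p" using p3 by simp
      then have "p dvd c * (c + 2)" by simp
      then show ?thesis using c p3 by simp
    qed
  qed
qed

lemma Rp_card:
  fixes p :: nat
  assumes "prime p" "odd p"
  shows "card {c. c < p \<and> p dvd c * (c + 2)} = 2"
proof -
  have p3: "p \<ge> 3" using assms prime_ge_2_nat[of p] by (cases "p = 2") auto
  show ?thesis using Rp_eq[OF assms] p3 by simp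
qed

lemma Rset_card:
  assumes "finite D" "\<forall>p\<in>D. prime p \<and> odd p"
  shows "card (Rset D) = 2 ^ card D"
  using assms
proof (induction D rule: finite_induct)
  case empty
  have "Rset {} = {0}" by (auto simp: Rset_def)
  then show ?case by simp
next
  case (insert p D)
  define d where "d = \<Prod>D"
  have pr: "prime p" "odd p" using insert.prems by auto
  have dpos: "d > 0" unfolding d_def using insert.prems insert.hyps
    by (metis (no_types, lifting) insert_iff not_prime_0 prod_pos zero_less_iff_neq_zero)
  have ppos: "p > 0" using pr prime_gt_0_nat by blast
  have cop: "coprime p d"
  proof -
    have "\<not> p dvd d"
    proof
      assume "p dvd d"
      then obtain q where q: "q \<in> D" "p dvd q" unfolding d_def
        using prime_dvd_prod_iff[OF insert.hyps(1) pr(1)] by auto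
      then have "prime q" using insert.prems by auto
      then have "p = q" using q pr primes_dvd_imp_eq by blast
      then show False using q insert.hyps by auto
    qed
    then show ?thesis using pr prime_imp_coprime by blast
  qed
  have prodi: "\<Prod>(insert p D) = p * d" unfolding d_def using insert.hyps by simp
  define phi where "phi = (\<lambda>c::nat. (c mod d, c mod p))"
  have inj: "inj_on phi {..<p * d}"
  proof (rule inj_onI)
    fix x y assume x: "x \<in> {..<p*d}" and y: "y \<in> {..<p*d}" and e: "phi x = phi y"
    then have "[x = y] (mod p)" "[x = y] (mod d)" by (auto simp: phi_def Cong.cong_def)
    then have "[x = y] (mod p * d)" using coprime_cong_mult_nat cop by blast
    then show "x = y" using x y cong_less_modulus_unique_nat by auto
  qed
  have img: "phi ` {..<p * d} = {..<d} \<times> {..<p}"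
  proof (rule card_subset_eq)
    show "finite ({..<d} \<times> {..<p})" by simp
    show "phi ` {..<p * d} \<subseteq> {..<d} \<times> {..<p}" using dpos ppos by (auto simp: phi_def)
    show "card (phi ` {..<p * d}) = card ({..<d} \<times> {..<p})"
      using card_image[OF inj] by (simp add: card_cartesian_product)
  qed
  define Rp where "Rp = {c. c < p \<and> p dvd c * (c + 2)}"
  have RD: "Rset D = {c \<in> {..<d}. \<forall>q\<in>D. q dvd c * (c + 2)}" by (simp add: Rset_def d_def)
  have qd: "q dvd d" if "q \<in> D" for q unfolding d_def using insert.hyps(1) that by (rule dvd_prodI)
  have cond: "(\<forall>q\<in>insert p D. q dvd c * (c + 2)) \<longleftrightarrow> (phi c \<in> Rset D \<times> Rp)" for c
  proof -
    have "(\<forall>q\<in>D. q dvd c * (c + 2)) \<longleftrightarrow> (\<forall>q\<in>D. q dvd (c mod d) * (c mod d + 2))"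
      using dvd_mod_cong[OF qd] by blast
    moreover have "(p dvd c * (c + 2)) \<longleftrightarrow> p dvd (c mod p) * (c mod p + 2)"
      using dvd_mod_cong[of p p c] by simp
    ultimately show ?thesis using dpos ppos by (auto simp: phi_def RD Rp_def)
  qed
  have Rins: "Rset (insert p D) = {c \<in> {..<p*d}. phi c \<in> Rset D \<times> Rp}"
  proof -
    have "Rset (insert p D) = {c \<in> {..<p*d}. \<forall>q\<in>insert p D. q dvd c*(c+2)}"
      by (simp only: Rset_def prodi)
    also have "\<dots> = {c \<in> {..<p*d}. phi c \<in> Rset D \<times> Rp}" by (simp only: cond)
    finally show ?thesis .
  qed
  have "phi ` Rset (insert p D) = Rset D \<times> Rp"
  proof
    show "phi ` Rset (insert p D) \<subseteq> Rset D \<times> Rp" unfolding Rins by auto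
    show "Rset D \<times> Rp \<subseteq> phi ` Rset (insert p D)"
    proof
      fix x assume x: "x \<in> Rset D \<times> Rp"
      then have "x \<in> {..<d} \<times> {..<p}" unfolding RD Rp_def by auto
      then obtain c where "c \<in> {..<p*d}" "phi c = x" using img by (metis imageE)
      then show "x \<in> phi ` Rset (insert p D)" unfolding Rins using x by auto
    qed
  qed
  moreover have inj2: "inj_on phi (Rset (insert p D))" using inj unfolding Rins by (rule inj_on_subset) auto
  ultimately have "card (Rset (insert p D)) = card (Rset D \<times> Rp)" using card_image[OF inj2] by simp
  also have "\<dots> = card (Rset D) * 2" using Rp_card[OF pr] by (simp add: card_cartesian_product Rp_def)
  finally show ?case using insert by simp
qed

lemma count_res:
  fixes N d c :: nat
  assumes "d > 0" "c < d"
  shows "real N / d - 1 \<le> card {n\<in>{1..N}. n mod d = c}"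
    and "card {n\<in>{1..N}. n mod d = c} \<le> real N / d + 1"
proof -
  define S where "S = {n\<in>{1..N}. n mod d = c}"
  have Ndiv: "real N / d - 1 \<le> real (N div d)" "real (N div d) \<le> real N / d"
  proof -
    have e: "real N = real d * real (N div d) + real (N mod d)"
      by (metis div_mult_mod_eq of_nat_add of_nat_mult mult.commute)
    have "real (N mod d) < real d" using assms by simp
    then show "real N / d - 1 \<le> real (N div d)" "real (N div d) \<le> real N / d"
      using e assms by (simp_all add: field_simps)
  qed
  have inj: "inj_on (\<lambda>n. n div d) S"
  proof (rule inj_onI)
    fix x y assume "x \<in> S" "y \<in> S" "x div d = y div d"
    then show "x = y" using div_mult_mod_eq[of x d] div_mult_mod_eq[of y d] unfolding S_def by auto
  qed
  have sub: "(\<lambda>n. n div d) ` S \<subseteq> {..N div d}" unfolding S_def by (auto intro: div_le_mono)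
  have "card S \<le> card {..N div d}" using card_inj_on_le[OF inj sub] by simp
  then have "card S \<le> N div d + 1" by simp
  then show "card S \<le> real N / d + 1" using Ndiv(2) by linarith
  have finS: "finite S" unfolding S_def by simp
  have "N div d \<le> card S"
  proof (cases "c = 0")
    case True
    have inj1: "inj_on (\<lambda>k. k * d) {1..N div d}" using assms by (auto intro: inj_onI)
    have sub1: "(\<lambda>k. k * d) ` {1..N div d} \<subseteq> S"
    proof
      fix x assume "x \<in> (\<lambda>k. k * d) ` {1..N div d}"
      then obtain k where k: "k \<in> {1..N div d}" "x = k * d" by auto
      have "k * d \<le> (N div d) * d" using k by simp
      also have "\<dots> \<le> N" by simp
      finally show "x \<in> S" unfolding S_def using k True assms by auto
    qed
    have "card {1..N div d} \<le> card S" using card_inj_on_le[OF inj1 sub1 finS] .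
    then show ?thesis by simp
  next
    case False
    have inj1: "inj_on (\<lambda>k. k * d + c) {..<N div d}" using assms by (auto intro: inj_onI)
    have sub1: "(\<lambda>k. k * d + c) ` {..<N div d} \<subseteq> S"
    proof
      fix x assume "x \<in> (\<lambda>k. k * d + c) ` {..<N div d}"
      then obtain k where k: "k < N div d" "x = k * d + c" by auto
      have "Suc k * d \<le> (N div d) * d" using k by (intro mult_right_mono) auto
      also have "\<dots> \<le> N" by simp
      finally have "k * d + c \<le> N" using assms by simp
      then show "x \<in> S" unfolding S_def using k False assms by auto
    qed
    have "card {..<N div d} \<le> card S" using card_inj_on_le[OF inj1 sub1 finS] .
    then show ?thesis by simp
  qed
  then show "real N / d - 1 \<le> card S" using Ndiv(1) by linarith
qed
lemma count_D:
  assumes "finite D" "\<forall>p\<in>D. prime p \<and> odd p"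
  shows "\<bar>real (card {n\<in>{1..N}. \<forall>p\<in>D. p dvd n * (n + 2)}) - 2 ^ card D * real N / \<Prod>D\<bar> \<le> 2 ^ card D"
proof -
  define d where "d = \<Prod>D"
  have dpos: "d > 0" unfolding d_def using assms
    by (metis not_prime_0 prod_pos zero_less_iff_neq_zero)
  define S where "S = {n\<in>{1..N}. \<forall>p\<in>D. p dvd n * (n + 2)}"
  have qd: "q dvd d" if "q \<in> D" for q unfolding d_def using assms(1) that by (rule dvd_prodI)
  have S2: "S = {n\<in>{1..N}. n mod d \<in> Rset D}"
  proof -
    have "(\<forall>p\<in>D. p dvd n * (n + 2)) \<longleftrightarrow> n mod d \<in> Rset D" for n
      using dvd_mod_cong[OF qd, of _ n] dpos by (auto simp: Rset_def d_def[symmetric])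
    then show ?thesis unfolding S_def by blast
  qed
  have "card S = (\<Sum>c\<in>Rset D. card {n\<in>S. n mod d = c})"
  proof -
    have "card S = (\<Sum>n\<in>S. 1)" by simp
    also have "\<dots> = (\<Sum>c\<in>Rset D. \<Sum>n\<in>{n\<in>S. n mod d = c}. 1)"
      by (rule sum.group[symmetric]) (auto simp: S2 Rset_def)
    finally show ?thesis by simp
  qed
  also have "\<dots> = (\<Sum>c\<in>Rset D. card {n\<in>{1..N}. n mod d = c})"
    by (intro sum.cong refl arg_cong[where f=card]) (auto simp: S2)
  finally have cS: "real (card S) = (\<Sum>c\<in>Rset D. real (card {n\<in>{1..N}. n mod d = c}))" by simp
  have cR: "card (Rset D) = 2 ^ card D" using Rset_card[OF assms] .
  have lt: "c < d" if "c \<in> Rset D" for c using that by (simp add: Rset_def d_def)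
  have "real (card S) \<le> (\<Sum>c\<in>Rset D. real N / d + 1)"
    unfolding cS by (intro sum_mono count_res(2) dpos lt)
  also have "\<dots> = 2 ^ card D * (real N / d + 1)" using cR by simp
  finally have u: "real (card S) \<le> 2 ^ card D * (real N / d + 1)" .
  have "(\<Sum>c\<in>Rset D. real N / d - 1) \<le> real (card S)"
    unfolding cS by (intro sum_mono count_res(1) dpos lt)
  moreover have "(\<Sum>c\<in>Rset D. real N / d - 1) = 2 ^ card D * (real N / d - 1)" by (simp only: sum_constant cR) simp
  ultimately have l: "2 ^ card D * (real N / d - 1) \<le> real (card S)" by linarith
  show ?thesis using u l unfolding S_def[symmetric] d_def[symmetric] by (simp add: abs_le_iff algebra_simps)
qed

lemma bonf_real:
  assumes "finite S" "even r"
  shows "(if S = {} then 1 else 0 :: real) \<le> (\<Sum>D\<in>{D. D \<subseteq> S \<and> card D \<le> r}. (-1)^card D)"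
proof -
  have "real_of_int (if S = {} then 1 else 0) \<le> real_of_int (\<Sum>D\<in>{D. D \<subseteq> S \<and> card D \<le> r}. (-1)^card D)"
    using bonf[OF assms] by (simp only: of_int_le_iff)
  moreover have "real_of_int (\<Sum>D\<in>{D. D \<subseteq> S \<and> card D \<le> r}. (-1)^card D) = (\<Sum>D\<in>{D. D \<subseteq> S \<and> card D \<le> r}. (-1)^card D)"
    by (simp only: of_int_sum of_int_power of_int_minus of_int_1)
  moreover have "real_of_int (if S = {} then 1 else 0) = (if S = {} then 1 else 0)" by simp
  ultimately show ?thesis by simp
qed

lemma prod_neg2:
  assumes "finite D"
  shows "(\<Prod>p\<in>D. - 2 / real p) = (-1)^card D * 2 ^ card D / real (\<Prod>D)"
proof -
  have "(\<Prod>p\<in>D. - 2 / real p) = (\<Prod>p\<in>D. - 2) / (\<Prod>p\<in>D. real p)" by (rule prod_dividef)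
  also have "\<dots> = (-2) ^ card D / real (\<Prod>D)" by (simp add: of_nat_prod)
  also have "(-2::real) ^ card D = (-1)^card D * 2 ^ card D" by (simp add: power_mult_distrib[symmetric])
  finally show ?thesis .
qed

lemma sieve:
  assumes "finite P" "\<forall>p\<in>P. prime p \<and> odd p" "even r"
  defines "DD \<equiv> {D. D \<subseteq> P \<and> card D \<le> r}"
  shows "real (card {n\<in>{1..N}. \<forall>p\<in>P. \<not> p dvd n * (n + 2)})
     \<le> real N * (\<Sum>D\<in>DD. \<Prod>p\<in>D. - 2 / real p) + (\<Sum>D\<in>DD. 2 ^ card D)"
proof -
  define S where "S n = {p\<in>P. p dvd n * (n + 2)}" for n
  have finDD: "finite DD" unfolding DD_def using assms(1) by simp
  have "real (card {n\<in>{1..N}. \<forall>p\<in>P. \<not> p dvd n * (n + 2)}) = (\<Sum>n\<in>{1..N}. if S n = {} then 1 else 0)"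
  proof -
    have "{n\<in>{1..N}. \<forall>p\<in>P. \<not> p dvd n * (n + 2)} = {n\<in>{1..N}. S n = {}}" by (auto simp: S_def)
    then show ?thesis using sum.inter_filter[of "{1..N}" "\<lambda>_. 1::real" "\<lambda>n. S n = {}"] by simp
  qed
  also have "\<dots> \<le> (\<Sum>n\<in>{1..N}. \<Sum>D\<in>{D. D \<subseteq> S n \<and> card D \<le> r}. (-1)^card D)"
    by (intro sum_mono bonf_real assms) (simp add: S_def assms)
  also have "\<dots> = (\<Sum>n\<in>{1..N}. \<Sum>D\<in>DD. if D \<subseteq> S n then (-1)^card D else 0)"
  proof (rule sum.cong[OF refl])
    fix n
    have "{D. D \<subseteq> S n \<and> card D \<le> r} = {D\<in>DD. D \<subseteq> S n}" unfolding DD_def S_def by auto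
    then show "(\<Sum>D\<in>{D. D \<subseteq> S n \<and> card D \<le> r}. (-1::real)^card D) = (\<Sum>D\<in>DD. if D \<subseteq> S n then (-1)^card D else 0)"
      using sum.inter_filter[OF finDD, of "\<lambda>D. (-1::real)^card D" "\<lambda>D. D \<subseteq> S n"] by simp
  qed
  also have "\<dots> = (\<Sum>D\<in>DD. \<Sum>n\<in>{1..N}. if D \<subseteq> S n then (-1)^card D else 0)"
    by (rule sum.swap)
  also have "\<dots> = (\<Sum>D\<in>DD. (-1)^card D * real (card {n\<in>{1..N}. \<forall>p\<in>D. p dvd n * (n + 2)}))"
  proof (rule sum.cong[OF refl])
    fix D assume "D \<in> DD"
    then have DP: "D \<subseteq> P" unfolding DD_def by auto
    have "{n\<in>{1..N}. D \<subseteq> S n} = {n\<in>{1..N}. \<forall>p\<in>D. p dvd n * (n + 2)}" using DP unfolding S_def by auto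
    then show "(\<Sum>n\<in>{1..N}. if D \<subseteq> S n then (-1::real)^card D else 0) = (-1)^card D * real (card {n\<in>{1..N}. \<forall>p\<in>D. p dvd n * (n + 2)})"
      using sum.inter_filter[of "{1..N}" "\<lambda>n. (-1::real)^card D" "\<lambda>n. D \<subseteq> S n"] by (simp add: mult.commute)
  qed
  also have "\<dots> \<le> (\<Sum>D\<in>DD. real N * (\<Prod>p\<in>D. - 2 / real p) + 2 ^ card D)"
  proof (rule sum_mono)
    fix D assume "D \<in> DD"
    then have DP: "D \<subseteq> P" unfolding DD_def by auto
    then have fD: "finite D" using assms(1) finite_subset by auto
    have pD: "\<forall>p\<in>D. prime p \<and> odd p" using DP assms(2) by auto
    define A where "A = real (card {n\<in>{1..N}. \<forall>p\<in>D. p dvd n * (n + 2)})"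
    have c: "\<bar>A - 2 ^ card D * real N / \<Prod>D\<bar> \<le> 2 ^ card D" unfolding A_def by (rule count_D[OF fD pD])
    have s: "\<bar>(-1::real)^card D\<bar> = 1" by simp
    have "(-1)^card D * A = (-1)^card D * (2 ^ card D * real N / \<Prod>D) + (-1)^card D * (A - 2 ^ card D * real N / \<Prod>D)"
      by (simp add: algebra_simps)
    also have "\<dots> \<le> (-1)^card D * (2 ^ card D * real N / \<Prod>D) + 2 ^ card D"
    proof -
      have "(-1::real)^card D * (A - 2 ^ card D * real N / \<Prod>D) \<le> \<bar>(-1::real)^card D * (A - 2 ^ card D * real N / \<Prod>D)\<bar>" by (rule abs_ge_self)
      also have "\<dots> = \<bar>A - 2 ^ card D * real N / \<Prod>D\<bar>" by (simp add: abs_mult)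
      finally show ?thesis using c by linarith
    qed
    also have "(-1)^card D * (2 ^ card D * real N / \<Prod>D) = real N * (\<Prod>p\<in>D. - 2 / real p)"
      unfolding prod_neg2[OF fD] by (simp add: algebra_simps)
    finally show "(-1)^card D * real (card {n\<in>{1..N}. \<forall>p\<in>D. p dvd n * (n + 2)}) \<le> real N * (\<Prod>p\<in>D. - 2 / real p) + 2 ^ card D"
      unfolding A_def .
  qed
  also have "\<dots> = real N * (\<Sum>D\<in>DD. \<Prod>p\<in>D. - 2 / real p) + (\<Sum>D\<in>DD. 2 ^ card D)"
    by (simp add: sum.distrib sum_distrib_left)
  finally show ?thesis .
qed

lemma pow_sum_prod:
  fixes b :: "'a \<Rightarrow> real"
  assumes "finite P"
  shows "(\<Sum>D\<in>Pow P. \<Prod>p\<in>D. b p) = (\<Prod>p\<in>P. 1 + b p)"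
  using prod_add[OF assms, of b "\<lambda>_. 1"] by (simp add: add.commute)

lemma trunc_bound:
  fixes b :: "'a \<Rightarrow> real" and t :: real
  assumes "finite P" "t \<ge> 1"
  shows "(\<Sum>D\<in>{D. D \<subseteq> P \<and> card D \<le> r}. \<Prod>p\<in>D. b p)
      \<le> (\<Prod>p\<in>P. 1 + b p) + (1 / t) ^ (r + 1) * (\<Prod>p\<in>P. 1 + t * \<bar>b p\<bar>)"
proof -
  define A where "A = {D. D \<subseteq> P \<and> card D \<le> r}"
  define B where "B = {D. D \<subseteq> P \<and> \<not> card D \<le> r}"
  have fA: "finite A" and fB: "finite B" unfolding A_def B_def using assms(1) by auto
  have PU: "Pow P = A \<union> B" "A \<inter> B = {}" unfolding A_def B_def by auto
  have "(\<Prod>p\<in>P. 1 + b p) = (\<Sum>D\<in>A. \<Prod>p\<in>D. b p) + (\<Sum>D\<in>B. \<Prod>p\<in>D. b p)"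
    unfolding pow_sum_prod[OF assms(1), symmetric] PU(1) by (rule sum.union_disjoint[OF fA fB PU(2)])
  moreover have "- (\<Sum>D\<in>B. \<Prod>p\<in>D. b p) \<le> (1 / t) ^ (r + 1) * (\<Prod>p\<in>P. 1 + t * \<bar>b p\<bar>)"
  proof -
    have "- (\<Sum>D\<in>B. \<Prod>p\<in>D. b p) \<le> (\<Sum>D\<in>B. \<bar>\<Prod>p\<in>D. b p\<bar>)"
    proof -
      have "\<bar>\<Sum>D\<in>B. \<Prod>p\<in>D. b p\<bar> \<le> (\<Sum>D\<in>B. \<bar>\<Prod>p\<in>D. b p\<bar>)" by (rule sum_abs)
      then show ?thesis by linarith
    qed
    also have "\<dots> \<le> (\<Sum>D\<in>B. (1 / t) ^ (r + 1) * (\<Prod>p\<in>D. t * \<bar>b p\<bar>))"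
    proof (rule sum_mono)
      fix D assume "D \<in> B"
      then have cD: "card D \<ge> r + 1" unfolding B_def by auto
      have "1 \<le> t ^ (card D - (r + 1))" using assms(2) by simp
      then have "1 \<le> (1 / t) ^ (r + 1) * t ^ card D"
        using assms(2) cD by (simp add: power_diff field_simps)
      moreover have "\<bar>\<Prod>p\<in>D. b p\<bar> \<ge> 0" by simp
      ultimately have "1 * \<bar>\<Prod>p\<in>D. b p\<bar> \<le> ((1 / t) ^ (r + 1) * t ^ card D) * \<bar>\<Prod>p\<in>D. b p\<bar>"
        by (rule mult_right_mono)
      then have "\<bar>\<Prod>p\<in>D. b p\<bar> \<le> ((1 / t) ^ (r + 1) * t ^ card D) * \<bar>\<Prod>p\<in>D. b p\<bar>" by simp
      also have "\<dots> = (1 / t) ^ (r + 1) * (\<Prod>p\<in>D. t * \<bar>b p\<bar>)"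
        by (simp add: prod.distrib abs_prod)
      finally show "\<bar>\<Prod>p\<in>D. b p\<bar> \<le> (1 / t) ^ (r + 1) * (\<Prod>p\<in>D. t * \<bar>b p\<bar>)" .
    qed
    also have "\<dots> = (1 / t) ^ (r + 1) * (\<Sum>D\<in>B. \<Prod>p\<in>D. t * \<bar>b p\<bar>)" by (simp add: sum_distrib_left)
    also have "\<dots> \<le> (1 / t) ^ (r + 1) * (\<Sum>D\<in>Pow P. \<Prod>p\<in>D. t * \<bar>b p\<bar>)"
    proof (rule mult_left_mono)
      show "(\<Sum>D\<in>B. \<Prod>p\<in>D. t * \<bar>b p\<bar>) \<le> (\<Sum>D\<in>Pow P. \<Prod>p\<in>D. t * \<bar>b p\<bar>)"
        using assms by (intro sum_mono2) (auto simp: B_def intro!: prod_nonneg)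
      show "0 \<le> (1 / t) ^ (r + 1)" using assms by simp
    qed
    also have "\<dots> = (1 / t) ^ (r + 1) * (\<Prod>p\<in>P. 1 + t * \<bar>b p\<bar>)" by (simp add: pow_sum_prod[OF assms(1)])
    finally show ?thesis .
  qed
  ultimately show ?thesis unfolding A_def by linarith
qed

lemma prod_exp_bound:
  fixes f :: "'a \<Rightarrow> real"
  assumes "finite P" "\<forall>p\<in>P. f p \<ge> 0"
  shows "(\<Prod>p\<in>P. 1 + f p) \<le> exp (\<Sum>p\<in>P. f p)"
proof -
  have "(\<Prod>p\<in>P. 1 + f p) \<le> (\<Prod>p\<in>P. exp (f p))"
    using assms by (intro prod_mono) (auto simp: add.commute[of _ 1])
  also have "\<dots> = exp (\<Sum>p\<in>P. f p)" by (simp add: exp_sum[OF assms(1)])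
  finally show ?thesis .
qed

lemma err_bound:
  assumes "finite P"
  shows "(\<Sum>D\<in>{D. D \<subseteq> P \<and> card D \<le> r}. (2::real) ^ card D) \<le> (r + 1) * (2 * card P + 1) ^ r"
proof -
  have fin: "finite {D. D \<subseteq> P \<and> card D \<le> r}" using assms by simp
  have "(\<Sum>D\<in>{D. D \<subseteq> P \<and> card D \<le> r}. (2::real) ^ card D)
      = (\<Sum>j\<le>r. \<Sum>D\<in>{D \<in> {D. D \<subseteq> P \<and> card D \<le> r}. card D = j}. 2 ^ card D)"
    by (rule sum.group[symmetric]) (use fin in auto)
  also have "\<dots> = (\<Sum>j\<le>r. real (card P choose j) * 2 ^ j)"
  proof (rule sum.cong[OF refl])
    fix j assume "j \<in> {..r}"
    then have "{D \<in> {D. D \<subseteq> P \<and> card D \<le> r}. card D = j} = {D. D \<subseteq> P \<and> card D = j}" by auto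
    then show "(\<Sum>D\<in>{D \<in> {D. D \<subseteq> P \<and> card D \<le> r}. card D = j}. (2::real) ^ card D) = real (card P choose j) * 2 ^ j"
      using n_subsets[OF assms, of j] by simp
  qed
  also have "\<dots> \<le> (\<Sum>j\<le>r. (2 * real (card P) + 1) ^ r)"
  proof (rule sum_mono)
    fix j assume j: "j \<in> {..r}"
    have "real (card P choose j) \<le> real (card P) ^ j"
    proof (cases "j \<le> card P")
      case True then show ?thesis using binomial_le_pow[OF True] by (metis of_nat_le_iff of_nat_power)
    next
      case False then show ?thesis by (simp add: binomial_eq_0)
    qed
    then have "real (card P choose j) * 2 ^ j \<le> real (card P) ^ j * 2 ^ j" by simp
    also have "\<dots> = (2 * real (card P)) ^ j" by (simp add: power_mult_distrib)
    also have "\<dots> \<le> (2 * real (card P) + 1) ^ j" by (intro power_mono) auto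
    also have "\<dots> \<le> (2 * real (card P) + 1) ^ r" using j by (intro power_increasing) auto
    finally show "real (card P choose j) * 2 ^ j \<le> (2 * real (card P) + 1) ^ r" .
  qed
  also have "\<dots> = (r + 1) * (2 * card P + 1) ^ r" by (simp add: algebra_simps)
  finally show ?thesis .
qed

lemma geom_le:
  fixes q :: nat assumes "q \<ge> 2"
  shows "(\<Sum>k\<le>V. (1 / real q) ^ k) \<le> real q / (real q - 1)"
proof -
  have x: "1 / real q \<noteq> 1" "1 / real q < 1" "1 / real q \<ge> 0" using assms by auto
  have "(\<Sum>k\<le>V. (1 / real q) ^ k) = (\<Sum>k<Suc V. (1 / real q) ^ k)" by (simp add: lessThan_Suc_atMost)
  also have "\<dots> = (1 - (1 / real q) ^ Suc V) / (1 - 1 / real q)" unfolding sum_gp_strict using x(1) by simp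
  also have "\<dots> \<le> 1 / (1 - 1 / real q)"
    using x by (intro divide_right_mono) auto
  also have "\<dots> = real q / (real q - 1)" using assms by (simp add: field_simps)
  finally show ?thesis .
qed

lemma smooth_sum:
  assumes "finite P" "\<forall>p\<in>P. prime p"
  shows "finite A \<Longrightarrow> \<forall>n\<in>A. n > 0 \<and> (\<forall>q. prime q \<and> q dvd n \<longrightarrow> q \<in> P)
     \<Longrightarrow> (\<Sum>n\<in>A. 1 / real n) \<le> (\<Prod>p\<in>P. real p / (real p - 1))"
  using assms
proof (induction P arbitrary: A rule: finite_induct)
  case empty
  have "A \<subseteq> {1}"
  proof
    fix n assume "n \<in> A"
    then have "n > 0" "\<forall>q. prime q \<and> q dvd n \<longrightarrow> False" using empty.prems by auto
    then show "n \<in> {1}" using prime_factor_nat[of n] by auto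
  qed
  then have "(\<Sum>n\<in>A. 1 / real n) \<le> (\<Sum>n\<in>{1}. 1 / real n)" by (intro sum_mono2) auto
  then show ?case by simp
next
  case (insert q P A)
  have q2: "q \<ge> 2" using insert.prems(3) prime_ge_2_nat by auto
  define v where "v n = multiplicity q n" for n
  define m where "m n = n div q ^ v n" for n
  have decomp: "n = q ^ v n * m n" for n unfolding v_def m_def using multiplicity_dvd[of q n] by simp
  have ndvd: "\<not> q dvd m n" if "n > 0" for n unfolding m_def v_def by (rule multiplicity_decompose) (use that q2 in auto)
  define psi where "psi n = (v n, m n)" for n
  have inj: "inj_on psi A"
  proof (rule inj_onI)
    fix x y assume "psi x = psi y" then show "x = y" using decomp[of x] decomp[of y] by (simp add: psi_def)
  qed
  define V where "V = Max (v ` A)"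
  define B where "B = m ` A"
  have fB: "finite B" unfolding B_def using insert.prems by simp
  have mpos: "m n > 0" if "n \<in> A" for n
  proof -
    have "n > 0" using that insert.prems by auto
    then show ?thesis using decomp[of n] by (metis gr0I mult_0_right)
  qed
  have Bprop: "\<forall>n\<in>B. n > 0 \<and> (\<forall>r. prime r \<and> r dvd n \<longrightarrow> r \<in> P)"
  proof
    fix k assume "k \<in> B"
    then obtain n where n: "n \<in> A" "k = m n" unfolding B_def by auto
    have "k > 0" using mpos n by simp
    moreover have "r \<in> P" if "prime r" "r dvd k" for r
    proof -
      have "r dvd n" using that(2) n decomp[of n] by (metis dvd_mult)
      then have "r \<in> insert q P" using insert.prems n that by auto
      moreover have "r \<noteq> q" using ndvd[of n] that n insert.prems by auto
      ultimately show ?thesis by auto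
    qed
    ultimately show "k > 0 \<and> (\<forall>r. prime r \<and> r dvd k \<longrightarrow> r \<in> P)" by auto
  qed
  have IH: "(\<Sum>k\<in>B. 1 / real k) \<le> (\<Prod>p\<in>P. real p / (real p - 1))"
    using insert.IH[OF fB Bprop] insert.prems by auto
  have sub: "psi ` A \<subseteq> {..V} \<times> B"
    unfolding psi_def V_def B_def using insert.prems by (auto intro: Max_ge)
  have "(\<Sum>n\<in>A. 1 / real n) = (\<Sum>x\<in>psi ` A. (1 / real q) ^ fst x * (1 / real (snd x)))"
  proof -
    have "(\<Sum>x\<in>psi ` A. (1 / real q) ^ fst x * (1 / real (snd x))) = (\<Sum>n\<in>A. (1 / real q) ^ v n * (1 / real (m n)))"
      by (subst sum.reindex[OF inj]) (simp add: psi_def)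
    also have "\<dots> = (\<Sum>n\<in>A. 1 / real n)"
    proof (rule sum.cong[OF refl])
      fix n assume "n \<in> A"
      have "real n = real q ^ v n * real (m n)" using decomp[of n] by (metis of_nat_mult of_nat_power)
      then show "(1 / real q) ^ v n * (1 / real (m n)) = 1 / real n" by (simp add: power_one_over)
    qed
    finally show ?thesis by simp
  qed
  also have "\<dots> \<le> (\<Sum>x\<in>{..V} \<times> B. (1 / real q) ^ fst x * (1 / real (snd x)))"
    using sub fB by (intro sum_mono2) auto
  also have "\<dots> = (\<Sum>k\<le>V. (1 / real q) ^ k) * (\<Sum>k\<in>B. 1 / real k)"
  proof -
    have "(\<Sum>x\<in>{..V} \<times> B. (1 / real q) ^ fst x * (1 / real (snd x))) = (\<Sum>i\<le>V. \<Sum>j\<in>B. (1 / real q) ^ i * (1 / real j))"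
      by (simp add: sum.cartesian_product')
    then show ?thesis by (simp add: sum_product)
  qed
  also have "\<dots> \<le> (real q / (real q - 1)) * (\<Prod>p\<in>P. real p / (real p - 1))"
    using IH geom_le[OF q2] q2 by (intro mult_mono) (auto intro: sum_nonneg)
  also have "\<dots> = (\<Prod>p\<in>insert q P. real p / (real p - 1))" using insert.hyps by simp
  finally show ?case .
qed

lemma euler_lower:
  "ln (real z + 1) \<le> (\<Prod>p\<in>{p. prime p \<and> p \<le> z}. real p / (real p - 1))"
proof -
  have "ln (real z + 1) \<le> harm z" by (rule ln_le_harm)
  also have "harm z = (\<Sum>n\<in>{1..z}. 1 / real n)" by (simp add: harm_def divide_inverse)
  also have "\<dots> \<le> (\<Prod>p\<in>{p. prime p \<and> p \<le> z}. real p / (real p - 1))"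
  proof (rule smooth_sum)
    show "\<forall>n\<in>{1..z}. 0 < n \<and> (\<forall>q. prime q \<and> q dvd n \<longrightarrow> q \<in> {p. prime p \<and> p \<le> z})"
      by (auto dest: dvd_imp_le)
  qed auto
  finally show ?thesis .
qed

definition Podd :: "nat \<Rightarrow> nat set" where "Podd w = {p. prime p \<and> 3 \<le> p \<and> p \<le> w}"
definition G :: "nat \<Rightarrow> real" where "G w = (\<Prod>p\<in>Podd w. real p / (real p - 1))"

lemma Podd_finite [simp]: "finite (Podd w)" unfolding Podd_def by simp

lemma Podd_odd: "\<forall>p\<in>Podd w. prime p \<and> odd p"
proof
  fix p assume "p \<in> Podd w"
  then have "prime p" "p \<ge> 3" unfolding Podd_def by auto
  then show "prime p \<and> odd p" using prime_odd_nat[of p] by auto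
qed

lemma factor_ge1: "p \<ge> 2 \<Longrightarrow> real p / (real p - 1) \<ge> 1" by (simp add: field_simps)

lemma G_ge1: "G w \<ge> 1"
  unfolding G_def by (rule prod_ge_1) (auto simp: Podd_def field_simps)

lemma G_lower: "ln (real w + 1) \<le> 2 * G w"
proof -
  define Q where "Q = {p. prime p \<and> p \<le> w}"
  have sub: "Podd w \<subseteq> Q" unfolding Podd_def Q_def by auto
  have fQ: "finite Q" unfolding Q_def by simp
  have "(\<Prod>p\<in>Q. real p / (real p - 1)) = (\<Prod>p\<in>Q - Podd w. real p / (real p - 1)) * G w"
    unfolding G_def by (rule prod.subset_diff[OF sub fQ])
  also have "(\<Prod>p\<in>Q - Podd w. real p / (real p - 1)) \<le> (\<Prod>p\<in>{2}. real p / (real p - 1))"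
  proof -
    have "Q - Podd w \<subseteq> {2}"
    proof
      fix p assume "p \<in> Q - Podd w"
      then have "prime p" "p < 3" unfolding Q_def Podd_def by auto
      then show "p \<in> {2}" using prime_ge_2_nat[of p] by auto
    qed
    moreover have "\<forall>p\<in>{2}. real p / (real p - 1) \<ge> 1" by simp
    ultimately show ?thesis
      by (intro prod_mono2) auto
  qed
  then have "(\<Prod>p\<in>Q - Podd w. real p / (real p - 1)) * G w \<le> 2 * G w"
    using G_ge1[of w] by (intro mult_right_mono) auto
  finally have "(\<Prod>p\<in>Q. real p / (real p - 1)) \<le> 2 * G w" .
  moreover have "ln (real w + 1) \<le> (\<Prod>p\<in>Q. real p / (real p - 1))" unfolding Q_def by (rule euler_lower)
  ultimately show ?thesis by linarith
qed

lemma G_step: "G (Suc w) \<le> 3 / 2 * G w"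
proof (cases "prime (Suc w) \<and> 3 \<le> Suc w")
  case True
  have "Podd (Suc w) = insert (Suc w) (Podd w)" unfolding Podd_def using True by auto
  then have "G (Suc w) = real (Suc w) / (real (Suc w) - 1) * G w" unfolding G_def
    by (simp add: Podd_def)
  also have "\<dots> \<le> 3 / 2 * G w"
    using True G_ge1[of w] by (intro mult_right_mono) (auto simp: field_simps)
  finally show ?thesis .
next
  case False
  then have "Podd (Suc w) = Podd w" unfolding Podd_def by (auto simp: le_Suc_eq)
  then show ?thesis using G_ge1[of w] unfolding G_def by simp
qed

lemma sum_recip_le_lnG: "(\<Sum>p\<in>Podd w. 1 / real p) \<le> ln (G w)"
proof -
  have "(\<Sum>p\<in>Podd w. 1 / real p) \<le> (\<Sum>p\<in>Podd w. ln (real p / (real p - 1)))"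
  proof (rule sum_mono)
    fix p assume "p \<in> Podd w"
    then have p: "real p \<ge> 3" unfolding Podd_def by auto
    have "ln ((real p - 1) / real p) \<le> (real p - 1) / real p - 1" using p by (intro ln_le_minus_one) auto
    moreover have "ln (real p / (real p - 1)) = - ln ((real p - 1) / real p)"
      using p by (simp add: ln_div)
    moreover have "(real p - 1) / real p - 1 = - (1 / real p)" using p by (simp add: field_simps)
    ultimately show "1 / real p \<le> ln (real p / (real p - 1))" by linarith
  qed
  also have "\<dots> = ln (G w)" unfolding G_def
    by (rule ln_prod[symmetric]) (auto simp: Podd_def)
  finally show ?thesis .
qed

lemma main_prod_le: "(\<Prod>p\<in>Podd w. 1 + - 2 / real p) \<le> 1 / (G w)^2"
proof -
  have "(\<Prod>p\<in>Podd w. 1 + - 2 / real p) \<le> (\<Prod>p\<in>Podd w. ((real p - 1) / real p) ^ 2)"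
  proof (rule prod_mono)
    fix p assume "p \<in> Podd w"
    then have p: "real p \<ge> 3" unfolding Podd_def by auto
    have "((real p - 1) / real p) ^ 2 = 1 - 2 / real p + 1 / (real p)^2"
      using p by (simp add: field_simps power2_eq_square)
    moreover have "1 / (real p)^2 \<ge> 0" by simp
    moreover have "1 - 2 / real p \<ge> 0" using p by (simp add: field_simps)
    ultimately show "0 \<le> 1 + - 2 / real p \<and> 1 + - 2 / real p \<le> ((real p - 1) / real p) ^ 2" by simp
  qed
  also have "\<dots> = (\<Prod>p\<in>Podd w. (real p - 1) / real p) ^ 2" by (simp add: prod_power_distrib)
  also have "(\<Prod>p\<in>Podd w. (real p - 1) / real p) = 1 / G w"
  proof -
    have "(\<Prod>p\<in>Podd w. (real p - 1) / real p) = (\<Prod>p\<in>Podd w. inverse (real p / (real p - 1)))"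
      by (intro prod.cong refl) simp
    also have "\<dots> = inverse (G w)" unfolding G_def using prod_inversef[of "\<lambda>p. real p / (real p - 1)" "Podd w"]
      by (simp add: comp_def)
    finally show ?thesis by (simp add: divide_inverse)
  qed
  finally show ?thesis by (simp add: power_one_over)
qed

lemma twin_bound:
  assumes K1: "K \<ge> 1"
  shows "real (card {p\<in>{1..N}. prime p \<and> prime (p + 2)})
    \<le> (exp (2 * K) + 1) + real N * (1 / K^2 + (1/8) powr (10 * ln K) * exp (16 * ln (3/2 * K)))
       + (10 * ln K + 3) * (2 * exp (2 * K) + 3) powr (10 * ln K + 2)"
proof -
  define z0 where "z0 = nat \<lceil>exp (2 * K)\<rceil>"
  have cpos: "0 \<le> \<lceil>exp (2 * K)\<rceil>" by (subst zero_le_ceiling) (use exp_gt_zero[of "2 * K"] in linarith)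
  have e0: "real z0 = real_of_int \<lceil>exp (2 * K)\<rceil>" unfolding z0_def using cpos by simp
  have z0_le: "real z0 \<le> exp (2 * K) + 1" unfolding e0 by linarith
  have "2 * K \<le> ln (real z0 + 1)"
  proof -
    have "exp (2 * K) \<le> real z0 + 1" unfolding e0 by linarith
    then have "ln (exp (2 * K)) \<le> ln (real z0 + 1)" by (subst ln_le_cancel_iff) auto
    then show ?thesis by simp
  qed
  then have Gz0: "K \<le> G z0" using G_lower[of z0] by linarith
  define w where "w = (LEAST w. K \<le> G w)"
  have Kw: "K \<le> G w" unfolding w_def by (rule LeastI[of _ z0]) (rule Gz0)
  have wz0: "w \<le> z0" unfolding w_def by (rule Least_le) (rule Gz0)
  have Gw: "G w \<le> 3/2 * K"
  proof (cases w)
    case 0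
    have "Podd 0 = {}" unfolding Podd_def by auto
    then show ?thesis using 0 K1 by (simp add: G_def)
  next
    case (Suc w')
    have "\<not> K \<le> G w'" using not_less_Least[of w' "\<lambda>w. K \<le> G w"] Suc unfolding w_def by auto
    then show ?thesis using G_step[of w'] Suc by simp
  qed
  define P where "P = Podd w"
  have fP: "finite P" unfolding P_def by simp
  have oP: "\<forall>p\<in>P. prime p \<and> odd p" unfolding P_def by (rule Podd_odd)
  have lnK: "ln K \<ge> 0" using K1 by simp
  define r where "r = 2 * nat \<lceil>5 * ln K\<rceil>"
  have er: "even r" unfolding r_def by simp
  have r_lo: "10 * ln K \<le> real r" unfolding r_def using lnK by linarith
  have r_hi: "real r \<le> 10 * ln K + 2" unfolding r_def using lnK by linarith
  define DD where "DD = {D. D \<subseteq> P \<and> card D \<le> r}"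
  define S where "S = {n\<in>{1..N}. \<forall>p\<in>P. \<not> p dvd n * (n + 2)}"
  have tsub: "{p\<in>{1..N}. prime p \<and> prime (p + 2)} \<subseteq> {1..w} \<union> S"
  proof
    fix p assume p: "p \<in> {p\<in>{1..N}. prime p \<and> prime (p + 2)}"
    show "p \<in> {1..w} \<union> S"
    proof (cases "p \<le> w")
      case True then show ?thesis using p by auto
    next
      case False
      have "\<not> q dvd p * (p + 2)" if q: "q \<in> P" for q
      proof
        assume "q dvd p * (p + 2)"
        moreover have pq: "prime q" "q \<le> w" using q unfolding P_def Podd_def by auto
        ultimately have "q dvd p \<or> q dvd p + 2" using prime_dvd_mult_iff by blast
        then have "q = p \<or> q = p + 2" using p pq primes_dvd_imp_eq by auto
        then show False using pq False by auto
      qed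
      then show ?thesis using p unfolding S_def by auto
    qed
  qed
  have "card {p\<in>{1..N}. prime p \<and> prime (p + 2)} \<le> card ({1..w} \<union> S)"
    by (rule card_mono[OF _ tsub]) (auto simp: S_def)
  also have "\<dots> \<le> card {1..w} + card S" by (rule card_Un_le)
  finally have c1: "real (card {p\<in>{1..N}. prime p \<and> prime (p + 2)}) \<le> real w + real (card S)" by simp
  have sv: "real (card S) \<le> real N * (\<Sum>D\<in>DD. \<Prod>p\<in>D. - 2 / real p) + (\<Sum>D\<in>DD. 2 ^ card D)"
    unfolding S_def DD_def by (rule sieve[OF fP oP er])
  have tb: "(\<Sum>D\<in>DD. \<Prod>p\<in>D. - 2 / real p) \<le> (\<Prod>p\<in>P. 1 + - 2 / real p) + (1 / 8) ^ (r + 1) * (\<Prod>p\<in>P. 1 + 8 * \<bar>- 2 / real p\<bar>)"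
    unfolding DD_def by (rule trunc_bound[OF fP]) simp
  have m1: "(\<Prod>p\<in>P. 1 + - 2 / real p) \<le> 1 / K^2"
  proof -
    have "(\<Prod>p\<in>P. 1 + - 2 / real p) \<le> 1 / (G w)^2" unfolding P_def by (rule main_prod_le)
    also have "\<dots> \<le> 1 / K^2" using Kw K1 by (intro divide_left_mono power_mono) auto
    finally show ?thesis .
  qed
  have m2: "(\<Prod>p\<in>P. 1 + 8 * \<bar>- 2 / real p\<bar>) \<le> exp (16 * ln (3/2 * K))"
  proof -
    have "(\<Prod>p\<in>P. 1 + 8 * \<bar>- 2 / real p\<bar>) \<le> exp (\<Sum>p\<in>P. 8 * \<bar>- 2 / real p\<bar>)"
      by (rule prod_exp_bound[OF fP]) auto
    also have "(\<Sum>p\<in>P. 8 * \<bar>- 2 / real p\<bar>) = 16 * (\<Sum>p\<in>P. 1 / real p)"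
      by (simp add: sum_distrib_left)
    also have "\<dots> \<le> 16 * ln (G w)" unfolding P_def using sum_recip_le_lnG[of w] by simp
    also have "\<dots> \<le> 16 * ln (3/2 * K)" using Gw G_ge1[of w] by simp
    finally show ?thesis by simp
  qed
  have m3: "(1 / 8 :: real) ^ (r + 1) \<le> (1/8) powr (10 * ln K)"
  proof -
    have "(1 / 8 :: real) ^ (r + 1) \<le> (1/8) ^ r" by (simp add: power_Suc)
    also have "\<dots> = (1/8) powr (real r)" by (simp add: powr_realpow)
    also have "\<dots> \<le> (1/8) powr (10 * ln K)" using r_lo by (intro powr_mono') auto
    finally show ?thesis .
  qed
  have main: "(\<Sum>D\<in>DD. \<Prod>p\<in>D. - 2 / real p) \<le> 1 / K^2 + (1/8) powr (10 * ln K) * exp (16 * ln (3/2 * K))"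
  proof -
    have "(1 / 8) ^ (r + 1) * (\<Prod>p\<in>P. 1 + 8 * \<bar>- 2 / real p\<bar>) \<le> (1/8) powr (10 * ln K) * exp (16 * ln (3/2 * K))"
      using m2 m3 by (intro mult_mono) (auto intro: prod_nonneg)
    then show ?thesis using tb m1 by linarith
  qed
  have cP: "real (card P) \<le> exp (2 * K) + 1"
  proof -
    have "card P \<le> card {1..w}" unfolding P_def Podd_def by (rule card_mono) auto
    then show ?thesis using wz0 z0_le by simp
  qed
  have err: "(\<Sum>D\<in>DD. (2::real) ^ card D) \<le> (10 * ln K + 3) * (2 * exp (2 * K) + 3) powr (10 * ln K + 2)"
  proof -
    have "(\<Sum>D\<in>DD. (2::real) ^ card D) \<le> (real r + 1) * (2 * real (card P) + 1) ^ r"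
      using err_bound[OF fP, of r] unfolding DD_def by (simp add: algebra_simps)
    also have "(real r + 1) * (2 * real (card P) + 1) ^ r \<le> (real r + 1) * (2 * exp (2 * K) + 3) ^ r"
      using cP by (intro mult_left_mono power_mono) auto
    also have "(2 * exp (2 * K) + 3) ^ r = (2 * exp (2 * K) + 3) powr (real r)"
      by (simp add: powr_realpow add_pos_pos)
    also have "(real r + 1) * \<dots> \<le> (real r + 1) * (2 * exp (2 * K) + 3) powr (10 * ln K + 2)"
      using r_hi by (intro mult_left_mono powr_mono) auto
    also have "\<dots> \<le> (10 * ln K + 3) * (2 * exp (2 * K) + 3) powr (10 * ln K + 2)"
      using r_hi by (intro mult_right_mono) auto
    finally show ?thesis .
  qed
  have "real N * (\<Sum>D\<in>DD. \<Prod>p\<in>D. - 2 / real p) \<le> real N * (1 / K^2 + (1/8) powr (10 * ln K) * exp (16 * ln (3/2 * K)))"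
    using main by (intro mult_left_mono) auto
  then show ?thesis using c1 sv err wz0 z0_le by linarith
qed

lemma a1: "eventually (\<lambda>x::real. exp (2 * ln x powr (3/5)) + 1 \<le> x / ln x powr (6/5) / 4) at_top"
  by real_asymp
lemma a3: "eventually (\<lambda>x::real. (10 * ln (ln x powr (3/5)) + 3) * (2 * exp (2 * ln x powr (3/5)) + 3) powr (10 * ln (ln x powr (3/5)) + 2) \<le> x / ln x powr (6/5) / 4) at_top"
  by real_asymp
lemma a4: "eventually (\<lambda>x::real. 1 \<le> ln x powr (3/5)) at_top"
  by real_asymp
lemma a5: "eventually (\<lambda>k::nat. 4 / ((real k + 1) * ln 2) powr (6/5) \<le> real k powr (-11/10)) at_top"
  by real_asymp

lemma ln8: "ln (8::real) \<ge> 9/5"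
proof -
  have "exp (9/5::real) ^ 5 = exp 9" by (simp add: exp_of_nat_mult[symmetric])
  also have "exp (9::real) = exp 1 ^ 9" by (simp add: exp_of_nat_mult[symmetric])
  also have "\<dots> \<le> 3 ^ 9" using exp_le by (intro power_mono) auto
  also have "(3::real) ^ 9 < 8 ^ 5" by simp
  finally have "exp (9/5::real) < 8" by (rule power_less_imp_less_base) simp
  then show ?thesis by (metis exp_le_cancel_iff exp_ln less_imp_le zero_less_numeral)
qed

lemma tail_simpl:
  assumes "K \<ge> (1::real)"
  shows "(1/8) powr (10 * ln K) * exp (16 * ln (3/2 * K)) \<le> (3/2)^16 / K^2"
proof -
  have lK: "ln K \<ge> 0" using assms by simp
  have "(1/8::real) powr (10 * ln K) = exp (- (10 * ln K * ln 8))"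
    by (simp add: powr_def ln_div)
  also have "\<dots> \<le> exp (- (18 * ln K))"
  proof -
    have "ln K * (9/5) \<le> ln K * ln 8" using mult_left_mono[OF ln8 lK] .
    then have "18 * ln K \<le> 10 * ln K * ln 8" by linarith
    then show ?thesis by simp
  qed
  finally have t1: "(1/8::real) powr (10 * ln K) \<le> exp (- (18 * ln K))" .
  have l: "ln (3/2 * K) = ln (3/2) + ln K" by (rule ln_mult_pos) (use assms in auto)
  have e2: "exp (16 * ln (3/2 * K)) = exp (16 * ln (3/2)) * exp (16 * ln K)"
    by (simp only: l distrib_left exp_add)
  have "(1/8) powr (10 * ln K) * exp (16 * ln (3/2 * K)) \<le> exp (- (18 * ln K)) * exp (16 * ln (3/2 * K))"
    using t1 by (intro mult_right_mono) auto
  also have "\<dots> = exp (16 * ln (3/2)) * exp (- (2 * ln K))"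
    unfolding e2 by (simp add: exp_add[symmetric] algebra_simps)
  also have "exp (16 * ln (3/2::real)) = (3/2)^16"
  proof -
    have "exp (of_nat 16 * ln (3/2::real)) = exp (ln (3/2)) ^ 16" by (rule exp_of_nat_mult)
    then show ?thesis by simp
  qed
  also have "exp (- (2 * ln K)) = 1 / K^2"
  proof -
    have "exp (of_nat 2 * ln K) = exp (ln K) ^ 2" by (rule exp_of_nat_mult)
    then have "exp (2 * ln K) = K^2" using assms by simp
    then show ?thesis by (simp add: exp_minus divide_inverse)
  qed
  finally show ?thesis by simp
qed

lemma twin_ev: "\<exists>N0. \<forall>N\<ge>N0. real (card {p\<in>{1..N}. prime p \<and> prime (p + 2)}) \<le> 1000 * real N / ln (real N) powr (6/5)"
proof -
  have "eventually (\<lambda>x::real. (exp (2 * ln x powr (3/5)) + 1 \<le> x / ln x powr (6/5) / 4)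
     \<and> ((10 * ln (ln x powr (3/5)) + 3) * (2 * exp (2 * ln x powr (3/5)) + 3) powr (10 * ln (ln x powr (3/5)) + 2) \<le> x / ln x powr (6/5) / 4)
     \<and> 1 \<le> ln x powr (3/5) \<and> 3 \<le> x) at_top"
    by (intro eventually_conj a1 a3 a4 eventually_ge_at_top)
  then obtain x0 :: real where x0: "\<And>x. x \<ge> x0 \<Longrightarrow> (exp (2 * ln x powr (3/5)) + 1 \<le> x / ln x powr (6/5) / 4)
     \<and> ((10 * ln (ln x powr (3/5)) + 3) * (2 * exp (2 * ln x powr (3/5)) + 3) powr (10 * ln (ln x powr (3/5)) + 2) \<le> x / ln x powr (6/5) / 4)
     \<and> 1 \<le> ln x powr (3/5) \<and> 3 \<le> x"
    unfolding eventually_at_top_linorder by blast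
  show ?thesis
  proof (intro exI allI impI)
    fix N :: nat assume "N \<ge> nat \<lceil>x0\<rceil>"
    then have "real N \<ge> x0" by linarith
    note h = x0[OF this]
    define K where "K = ln (real N) powr (3/5)"
    have K1: "K \<ge> 1" using h unfolding K_def by simp
    have b1: "real (card {p\<in>{1..N}. prime p \<and> prime (p + 2)})
      \<le> (exp (2 * K) + 1) + real N * (1 / K^2 + (1/8) powr (10 * ln K) * exp (16 * ln (3/2 * K)))
       + (10 * ln K + 3) * (2 * exp (2 * K) + 3) powr (10 * ln K + 2)"
      by (rule twin_bound[OF K1])
    have b2: "real N * (1 / K^2 + (1/8) powr (10 * ln K) * exp (16 * ln (3/2 * K))) \<le> real N * (1 / K^2 + (3/2)^16 / K^2)"
      using tail_simpl[OF K1] by (intro mult_left_mono) auto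
    have b3: "real N * (1 / K^2 + (3/2)^16 / K^2) = (1 + (3/2)^16) * (real N / ln (real N) powr (6/5))"
    proof -
      have lpos: "ln (real N) > 0" using h by simp
      have "K^2 = ln (real N) powr (6/5)" unfolding K_def
        using lpos by (simp add: powr_realpow[symmetric] powr_powr)
      then show ?thesis by (simp add: field_simps)
    qed
    note b1 b2 b3
    moreover have Lnn: "real N / ln (real N) powr (6/5) \<ge> 0" by simp
    moreover have "(1 + (3/2::real)^16) \<le> 700" by (simp add: power_divide)
    then have "(1 + (3/2::real)^16) * (real N / ln (real N) powr (6/5)) \<le> 700 * (real N / ln (real N) powr (6/5))"
      using Lnn by (intro mult_right_mono) auto
    moreover have "exp (2 * K) + 1 \<le> real N / ln (real N) powr (6/5) / 4" using h unfolding K_def by blast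
    moreover have "(10 * ln K + 3) * (2 * exp (2 * K) + 3) powr (10 * ln K + 2) \<le> real N / ln (real N) powr (6/5) / 4"
      using h unfolding K_def by blast
    moreover have "1000 * real N / ln (real N) powr (6/5) = 1000 * (real N / ln (real N) powr (6/5))" by simp
    ultimately show "real (card {p\<in>{1..N}. prime p \<and> prime (p + 2)}) \<le> 1000 * real N / ln (real N) powr (6/5)"
      by linarith
  qed
qed

lemma a6: "eventually (\<lambda>k::nat. 2000 / ((real k + 1) * ln 2) powr (6/5) \<le> real k powr (-11/10)) at_top"
  by real_asymp

theorem corollary3p3:
  shows "summable (\<lambda>p::nat. if prime p \<and> prime (p + 2) then 1 / real p else 0)"
proof -
  define f where "f = (\<lambda>p::nat. if prime p \<and> prime (p + 2) then 1 / real p else 0)"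
  have fnn: "f n \<ge> 0" for n unfolding f_def by simp
  obtain N0 where N0: "\<And>N. N \<ge> N0 \<Longrightarrow> real (card {p\<in>{1..N}. prime p \<and> prime (p + 2)}) \<le> 1000 * real N / ln (real N) powr (6/5)"
    using twin_ev by blast
  define b where "b k = (\<Sum>n\<in>{2^k..<2^(k+1)}. f n)" for k :: nat
  have bnn: "b k \<ge> 0" for k unfolding b_def by (intro sum_nonneg fnn)
  have block: "b k \<le> 2000 / ((real k + 1) * ln 2) powr (6/5)" if k: "k \<ge> N0" for k
  proof -
    define T where "T = {n\<in>{(2::nat)^k..<2^(k+1)}. prime n \<and> prime (n + 2)}"
    have "b k \<le> (\<Sum>n\<in>{(2::nat)^k..<2^(k+1)}. if prime n \<and> prime (n + 2) then 1 / (2::real)^k else 0)"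
      unfolding b_def f_def
    proof (rule sum_mono)
      fix n assume n: "n \<in> {2^k..<(2::nat)^(k+1)}"
      then have "real n \<ge> 2^k" by (metis atLeastLessThan_iff of_nat_le_iff of_nat_numeral of_nat_power)
      moreover have pk: "(0::real) < 2^k" by simp
      ultimately have np: "0 < real n" by linarith
      have "1 / real n \<le> 1 / 2^k"
        by (rule divide_left_mono[OF \<open>real n \<ge> 2^k\<close>]) (use np pk in auto)
      then show "(if prime n \<and> prime (n + 2) then 1 / real n else 0) \<le> (if prime n \<and> prime (n + 2) then 1 / 2^k else 0)"
        by simp
    qed
    also have "\<dots> = real (card T) / 2^k"
      unfolding T_def using sum.inter_filter[of "{(2::nat)^k..<2^(k+1)}" "\<lambda>_. 1 / (2::real)^k" "\<lambda>n. prime n \<and> prime (n + 2)"]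
      by simp
    also have "\<dots> \<le> real (card {p\<in>{1..(2::nat)^(k+1)}. prime p \<and> prime (p + 2)}) / 2^k"
    proof -
      have "card T \<le> card {p\<in>{1..(2::nat)^(k+1)}. prime p \<and> prime (p + 2)}"
        unfolding T_def by (rule card_mono) auto
      then show ?thesis by (intro divide_right_mono) auto
    qed
    also have "\<dots> \<le> (1000 * real (2^(k+1)) / ln (real (2^(k+1))) powr (6/5)) / 2^k"
    proof -
      have "(2::nat)^(k+1) \<ge> k + 1" by (induction k) auto
      then have "(2::nat)^(k+1) \<ge> N0" using k by linarith
      then show ?thesis by (intro divide_right_mono N0) auto
    qed
    also have "\<dots> = 2000 / ((real k + 1) * ln 2) powr (6/5)"
    proof -
      have "ln ((2::real)^(k+1)) = real (k+1) * ln 2" by (rule ln_realpow)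
      then have "ln (real (2^(k+1))) = (real k + 1) * ln 2" by simp
      then show ?thesis by (simp add: field_simps)
    qed
    finally show ?thesis .
  qed
  have "eventually (\<lambda>k. norm (b k) \<le> real k powr (-11/10)) at_top"
  proof -
    have "eventually (\<lambda>k. k \<ge> N0 \<and> 2000 / ((real k + 1) * ln 2) powr (6/5) \<le> real k powr (-11/10)) at_top"
      by (intro eventually_conj a6 eventually_ge_at_top)
    then show ?thesis
    proof (rule eventually_mono)
      fix k assume "k \<ge> N0 \<and> 2000 / ((real k + 1) * ln 2) powr (6/5) \<le> real k powr (-11/10)"
      then show "norm (b k) \<le> real k powr (-11/10)" using block[of k] bnn[of k] by simp
    qed
  qed
  moreover have "summable (\<lambda>k. real k powr (-11/10))" by (simp add: summable_real_powr_iff)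
  ultimately have sb: "summable b" by (rule summable_comparison_test_ev)
  have f0: "f 0 = 0" unfolding f_def by simp
  have pow: "(\<Sum>n<2^M. f n) = (\<Sum>k<M. b k)" for M
  proof (induction M)
    case 0 then show ?case using f0 by simp
  next
    case (Suc M)
    have "(\<Sum>n<2^Suc M. f n) = (\<Sum>n\<in>{0..<2^M}. f n) + (\<Sum>n\<in>{2^M..<2^Suc M}. f n)"
      by (subst sum.atLeastLessThan_concat) (auto simp: atLeast0LessThan)
    also have "\<dots> = (\<Sum>k<M. b k) + b M" using Suc by (simp add: atLeast0LessThan b_def)
    finally show ?case by simp
  qed
  have "summable f"
  proof (rule summableI_nonneg_bounded)
    show "0 \<le> f n" for n by (rule fnn)
    fix M
    have "(\<Sum>n<M. f n) \<le> (\<Sum>n<2^M. f n)"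
    proof (rule sum_mono2)
      show "{..<M} \<subseteq> {..<2^M}" using less_exp[of M] by auto
    qed (auto intro: fnn)
    also have "\<dots> = (\<Sum>k<M. b k)" by (rule pow)
    also have "\<dots> \<le> suminf b" by (rule sum_le_suminf[OF sb]) (auto intro: bnn)
    finally show "(\<Sum>n<M. f n) \<le> suminf b" .
  qed
  then show ?thesis unfolding f_def .
qed

end
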